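(* Let $N$ be finite, $\mathbf P$ stochastic on $N$, $0<\beta<1$, $\mathbf R\in\mathbb R^N$, $S\subseteq N$. Let $(a_i)_{i\in N}$ and $(b_i)_{i\in N}$ be the unique solutions of $$a_i=\beta R_i+\beta\sum_{j\in S}p_{ij}a_j,\qquad b_i=\beta+\beta\sum_{j\in S}p_{ij}b_j,\qquad i\in N.$$ Then $a_i=\beta r_i^S/(1-\beta)$ and $b_i=\beta w_i^S/(1-\beta)$ for $i\in S$, and $a_i=\beta r_i^S$, $b_i=\beta w_i^S$ for $i\in S^c$. In particular $a_i/b_i=\nu_i^S$ for all $i\in N$.
   Context: $N$ finite, $\mathbf P=(p_{ij})$ stochastic, $\beta\in(0,1)$, $\mathbf R=(R_j)$; $X(t)$ the Markov chain with matrix $\mathbf P$, $\mathsf E_i$ expectation given $X(0)=i$, $S^c=N\setminus S$. For $S\subseteq N$, $\tau_S=\min\{t\ge0:X(t)\notin S\}$, $f_i^S=\mathsf{E}_i[\sum_{t=0}^{\tau_S-1}R_{X(t)}\beta^t]$, $g_i^S=\mathsf{E}_i[\sum_{t=0}^{\tau_S-1}\beta^t]$, $w_i^S=1+\beta\sum_jp_{ij}g_j^S-\beta g_i^S$, $r_i^S=R_i+\beta\sum_jp_{ij}f_j^S-\beta f_i^S$, $\nu_i^S=r_i^S/w_i^S$. *)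

theory Defs
  imports "HOL-Analysis.Analysis"
begin

definition stochastic :: "('n::finite \<Rightarrow> 'n \<Rightarrow> real) \<Rightarrow> bool" where
  "stochastic P \<longleftrightarrow> (\<forall>i j. 0 \<le> P i j) \<and> (\<forall>i. (\<Sum>j\<in>UNIV. P i j) = 1)"

text \<open>stay P S t i j = P_i(X(0),...,X(t) all lie in S and X(t) = j), i.e. P_i(t < tau_S, X(t) = j).\<close>
fun stay :: "('n::finite \<Rightarrow> 'n \<Rightarrow> real) \<Rightarrow> 'n set \<Rightarrow> nat \<Rightarrow> 'n \<Rightarrow> 'n \<Rightarrow> real" where
  "stay P S 0 i j = (if i \<in> S \<and> j = i then 1 else 0)"
| "stay P S (Suc t) i j = (if j \<in> S then (\<Sum>k\<in>UNIV. stay P S t i k * P k j) else 0)"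

text \<open>f_i^S = E_i[ sum_{t < tau_S} R_{X(t)} beta^t ] = sum_t beta^t E_i[R_{X(t)} 1{t < tau_S}].\<close>
definition fS :: "('n::finite \<Rightarrow> 'n \<Rightarrow> real) \<Rightarrow> real \<Rightarrow> ('n \<Rightarrow> real) \<Rightarrow> 'n set \<Rightarrow> 'n \<Rightarrow> real" where
  "fS P \<beta> R S i = (\<Sum>t. \<beta> ^ t * (\<Sum>j\<in>UNIV. stay P S t i j * R j))"

definition gS :: "('n::finite \<Rightarrow> 'n \<Rightarrow> real) \<Rightarrow> real \<Rightarrow> 'n set \<Rightarrow> 'n \<Rightarrow> real" where
  "gS P \<beta> S i = (\<Sum>t. \<beta> ^ t * (\<Sum>j\<in>UNIV. stay P S t i j))"

definition wS :: "('n::finite \<Rightarrow> 'n \<Rightarrow> real) \<Rightarrow> real \<Rightarrow> 'n set \<Rightarrow> 'n \<Rightarrow> real" where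
  "wS P \<beta> S i = 1 + \<beta> * (\<Sum>j\<in>UNIV. P i j * gS P \<beta> S j) - \<beta> * gS P \<beta> S i"

definition rS :: "('n::finite \<Rightarrow> 'n \<Rightarrow> real) \<Rightarrow> real \<Rightarrow> ('n \<Rightarrow> real) \<Rightarrow> 'n set \<Rightarrow> 'n \<Rightarrow> real" where
  "rS P \<beta> R S i = R i + \<beta> * (\<Sum>j\<in>UNIV. P i j * fS P \<beta> R S j) - \<beta> * fS P \<beta> R S i"

definition nuS :: "('n::finite \<Rightarrow> 'n \<Rightarrow> real) \<Rightarrow> real \<Rightarrow> ('n \<Rightarrow> real) \<Rightarrow> 'n set \<Rightarrow> 'n \<Rightarrow> real" where
  "nuS P \<beta> R S i = rS P \<beta> R S i / wS P \<beta> S i"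

end

theory Submission
  imports Defs
begin

lemma stay_nonneg:
  assumes "stochastic P" shows "0 \<le> stay P S t i j"
  using assms by (induction t arbitrary: j) (auto simp: stochastic_def intro!: sum_nonneg)

lemma stay_sum_le:
  assumes "stochastic P" shows "(\<Sum>j\<in>UNIV. stay P S t i j) \<le> 1"
proof (induction t)
  case 0
  have "(\<Sum>j\<in>UNIV. stay P S 0 i j) = (\<Sum>j\<in>UNIV. if j = i then (if i \<in> S then 1 else 0) else 0)"
    by (intro sum.cong) auto
  also have "\<dots> \<le> 1" by (simp add: sum.delta)
  finally show ?case .
next
  case (Suc t)
  have "(\<Sum>j\<in>UNIV. stay P S (Suc t) i j) \<le> (\<Sum>j\<in>UNIV. \<Sum>k\<in>UNIV. stay P S t i k * P k j)"
    using assms by (intro sum_mono) (auto simp: stochastic_def stay_nonneg intro!: sum_nonneg)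
  also have "\<dots> = (\<Sum>k\<in>UNIV. stay P S t i k * (\<Sum>j\<in>UNIV. P k j))"
    by (subst sum.swap) (simp add: sum_distrib_left)
  also have "\<dots> = (\<Sum>k\<in>UNIV. stay P S t i k)"
    using assms by (simp add: stochastic_def)
  finally show ?case using Suc by simp
qed

lemma stay_le1:
  assumes "stochastic P" shows "stay P S t i j \<le> 1"
proof -
  have "stay P S t i j \<le> (\<Sum>j\<in>UNIV. stay P S t i j)"
    by (rule member_le_sum) (auto simp: stay_nonneg[OF assms])
  with stay_sum_le[OF assms, of S t i] show ?thesis by linarith
qed

lemma stay_back:
  "stay P S (Suc t) i j = (if i \<in> S then (\<Sum>k\<in>UNIV. P i k * stay P S t k j) else 0)"
proof (induction t arbitrary: j)
  case 0
  have e1: "\<And>c x. (if c then 1 else 0) * (x::real) = (if c then x else 0)" by simp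
  have e2: "\<And>c x. (x::real) * (if c then 1 else 0) = (if c then x else 0)" by simp
  have l: "(\<Sum>k\<in>UNIV. stay P S 0 i k * P k j) = (if i \<in> S then P i j else 0)"
    by (simp add: e1 if_distrib[where f="\<lambda>x. x * _"] cong: if_cong)
  have r: "(\<Sum>k\<in>UNIV. P i k * stay P S 0 k j) = (if j \<in> S then P i j else 0)"
  proof -
    have "(\<Sum>k\<in>UNIV. P i k * stay P S 0 k j) = (\<Sum>k\<in>UNIV. if k = j then (if j \<in> S then P i j else 0) else 0)"
      by (intro sum.cong) auto
    then show ?thesis by simp
  qed
  show ?case by (simp only: stay.simps(2) l r) simp
next
  case (Suc t)
  have "stay P S (Suc (Suc t)) i j = (if j \<in> S then (\<Sum>k\<in>UNIV. stay P S (Suc t) i k * P k j) else 0)"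
    by simp
  also have "\<dots> = (if j \<in> S then (\<Sum>k\<in>UNIV. (if i \<in> S then (\<Sum>m\<in>UNIV. P i m * stay P S t m k) else 0) * P k j) else 0)"
    using Suc by simp
  also have "\<dots> = (if i \<in> S then (\<Sum>m\<in>UNIV. P i m * stay P S (Suc t) m j) else 0)"
    by (auto simp: sum_distrib_left sum_distrib_right mult.assoc intro: sum.swap)
  finally show ?case .
qed

lemma stay_out: "i \<notin> S \<Longrightarrow> stay P S t i j = 0"
  by (cases t) (simp_all add: stay_back del: stay.simps(2))

definition cc where "cc P S R t i = (\<Sum>j\<in>UNIV. stay P S t i j * R j)"

lemma cc_bound:
  assumes "stochastic P" shows "\<bar>cc P S R t i\<bar> \<le> (\<Sum>j\<in>UNIV. \<bar>R j\<bar>)"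
proof -
  have "\<bar>cc P S R t i\<bar> \<le> (\<Sum>j\<in>UNIV. \<bar>stay P S t i j * R j\<bar>)"
    unfolding cc_def by (rule sum_abs)
  also have "\<dots> \<le> (\<Sum>j\<in>UNIV. \<bar>R j\<bar>)"
  proof (rule sum_mono)
    fix j
    have "\<bar>stay P S t i j * R j\<bar> = stay P S t i j * \<bar>R j\<bar>"
      using stay_nonneg[OF assms] by (simp add: abs_mult)
    also have "\<dots> \<le> 1 * \<bar>R j\<bar>"
      by (rule mult_right_mono) (auto simp: stay_le1[OF assms])
    finally show "\<bar>stay P S t i j * R j\<bar> \<le> \<bar>R j\<bar>" by simp
  qed
  finally show ?thesis .
qed

lemma cc_summable:
  assumes "stochastic P" "0 < \<beta>" "\<beta> < 1"
  shows "summable (\<lambda>t. \<beta> ^ t * cc P S R t i)"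
proof (rule summable_comparison_test)
  show "\<exists>N. \<forall>n\<ge>N. norm (\<beta> ^ n * cc P S R n i) \<le> (\<Sum>j\<in>UNIV. \<bar>R j\<bar>) * \<beta> ^ n"
  proof (intro exI allI impI)
    fix n :: nat
    have "norm (\<beta> ^ n * cc P S R n i) = \<beta> ^ n * \<bar>cc P S R n i\<bar>"
      using assms by (simp add: abs_mult)
    also have "\<dots> \<le> \<beta> ^ n * (\<Sum>j\<in>UNIV. \<bar>R j\<bar>)"
      using assms cc_bound[OF assms(1)] by (intro mult_left_mono) auto
    finally show "norm (\<beta> ^ n * cc P S R n i) \<le> (\<Sum>j\<in>UNIV. \<bar>R j\<bar>) * \<beta> ^ n"
      by (simp add: mult.commute)
  qed
  show "summable (\<lambda>n. (\<Sum>j\<in>UNIV. \<bar>R j\<bar>) * \<beta> ^ n)"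
    using assms by (intro summable_mult summable_geometric) auto
qed

lemma cc_Suc: "cc P S R (Suc t) i = (if i \<in> S then (\<Sum>k\<in>UNIV. P i k * cc P S R t k) else 0)"
  unfolding cc_def stay_back
  by (auto simp: sum_distrib_left sum_distrib_right mult.assoc intro: sum.swap)

lemma fS_eq:
  assumes "stochastic P" "0 < \<beta>" "\<beta> < 1"
  shows "fS P \<beta> R S i = (if i \<in> S then R i + \<beta> * (\<Sum>j\<in>UNIV. P i j * fS P \<beta> R S j) else 0)"
proof -
  have F: "fS P \<beta> R S i = (\<Sum>t. \<beta> ^ t * cc P S R t i)" for i
    unfolding fS_def cc_def ..
  show ?thesis
  proof (cases "i \<in> S")
    case False
    then show ?thesis unfolding fS_def by (simp add: stay_out)
  next
    case True
    have s: "summable (\<lambda>t. \<beta> ^ t * cc P S R t i)" for i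
      using cc_summable[OF assms] .
    have "fS P \<beta> R S i = (\<Sum>t. \<beta> ^ Suc t * cc P S R (Suc t) i) + \<beta> ^ 0 * cc P S R 0 i"
      unfolding F by (rule suminf_split_head[OF s, symmetric, unfolded diff_eq_eq])
    also have "\<beta> ^ 0 * cc P S R 0 i = R i"
      using True by (simp add: cc_def if_distrib[where f="\<lambda>x. x * _"] sum.delta cong: if_cong)
    also have "(\<Sum>t. \<beta> ^ Suc t * cc P S R (Suc t) i) = (\<Sum>t. \<Sum>k\<in>UNIV. \<beta> * P i k * (\<beta> ^ t * cc P S R t k))"
      using True by (simp add: cc_Suc sum_distrib_left mult_ac)
    also have "\<dots> = (\<Sum>k\<in>UNIV. \<Sum>t. \<beta> * P i k * (\<beta> ^ t * cc P S R t k))"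
      by (rule suminf_sum) (intro summable_mult s)
    also have "\<dots> = (\<Sum>k\<in>UNIV. \<beta> * P i k * fS P \<beta> R S k)"
      unfolding F by (intro sum.cong refl suminf_mult s)
    finally show ?thesis using True by (simp add: sum_distrib_left mult_ac)
  qed
qed

lemma uniq:
  assumes "stochastic P" "0 < \<beta>" "\<beta> < 1"
    and a: "\<forall>i. a i = (c i::real) + \<beta> * (\<Sum>j\<in>S. P i j * a j)"
    and b: "\<forall>i. b i = c i + \<beta> * (\<Sum>j\<in>S. P i j * b j)"
  shows "a = b"
proof -
  define d where "d i = \<bar>a i - b i\<bar>" for i
  define m where "m = Max (range d)"
  have dm: "d i \<le> m" for i unfolding m_def by (rule Max_ge) auto
  have m0: "0 \<le> m" using dm[of undefined] unfolding d_def by linarith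
  have P0: "0 \<le> P i j" for i j using assms(1) unfolding stochastic_def by blast
  have P1: "(\<Sum>j\<in>UNIV. P i j) = 1" for i using assms(1) unfolding stochastic_def by blast
  have dle: "d i \<le> \<beta> * m" for i
  proof -
    have "a i - b i = (c i + \<beta> * (\<Sum>j\<in>S. P i j * a j)) - (c i + \<beta> * (\<Sum>j\<in>S. P i j * b j))"
      using a b by metis
    also have "\<dots> = \<beta> * (\<Sum>j\<in>S. P i j * (a j - b j))"
      by (simp add: algebra_simps sum_subtractf)
    finally have e: "d i = \<beta> * \<bar>\<Sum>j\<in>S. P i j * (a j - b j)\<bar>"
      unfolding d_def using assms(2) by (simp add: abs_mult)
    have t1: "\<bar>\<Sum>j\<in>S. P i j * (a j - b j)\<bar> \<le> (\<Sum>j\<in>S. \<bar>P i j * (a j - b j)\<bar>)"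
      by (rule sum_abs)
    have t2: "(\<Sum>j\<in>S. \<bar>P i j * (a j - b j)\<bar>) \<le> (\<Sum>j\<in>S. P i j * m)"
    proof (rule sum_mono)
      fix j
      have "\<bar>P i j * (a j - b j)\<bar> = P i j * d j" unfolding d_def using P0[of i j] by (simp add: abs_mult)
      also have "\<dots> \<le> P i j * m" by (rule mult_left_mono[OF dm P0])
      finally show "\<bar>P i j * (a j - b j)\<bar> \<le> P i j * m" .
    qed
    have t3: "(\<Sum>j\<in>S. P i j * m) \<le> (\<Sum>j\<in>UNIV. P i j * m)"
      by (rule sum_mono2) (auto intro: mult_nonneg_nonneg P0 m0)
    have t4: "(\<Sum>j\<in>UNIV. P i j * m) = m" by (simp add: P1 flip: sum_distrib_right)
    have "\<bar>\<Sum>j\<in>S. P i j * (a j - b j)\<bar> \<le> m" using t1 t2 t3 t4 by linarith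
    then show ?thesis unfolding e using assms(2) by (simp add: mult_left_mono)
  qed
  have "m \<in> range d" unfolding m_def by (rule Max_in) auto
  then obtain k where "m = d k" by blast
  hence mb: "m \<le> \<beta> * m" using dle[of k] by simp
  have "(1 - \<beta>) * m \<le> 0" using mb by (simp add: algebra_simps)
  moreover have "0 \<le> (1 - \<beta>) * m" using m0 assms by simp
  ultimately have "(1 - \<beta>) * m = 0" by linarith
  hence "m = 0" using assms by simp
  hence "d i = 0" for i using dm[of i] unfolding d_def by simp
  thus ?thesis unfolding d_def by (auto intro!: ext)
qed

lemma gen:
  assumes "stochastic P" "0 < \<beta>" "\<beta> < 1"
  shows "(\<exists>!a :: 'n::finite \<Rightarrow> real. \<forall>i. a i = \<beta> * R i + \<beta> * (\<Sum>j\<in>S. P i j * a j))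
     \<and> (\<forall>a. (\<forall>i. a i = \<beta> * R i + \<beta> * (\<Sum>j\<in>S. P i j * a j)) \<longrightarrow>
          (\<forall>i\<in>S. a i = \<beta> * rS P \<beta> R S i / (1 - \<beta>)) \<and> (\<forall>i\<in>-S. a i = \<beta> * rS P \<beta> R S i))"
proof -
  define F where "F = fS P \<beta> R S"
  have FE: "F i = (if i \<in> S then R i + \<beta> * (\<Sum>j\<in>UNIV. P i j * F j) else 0)" for i
    unfolding F_def by (rule fS_eq[OF assms])
  have FS: "F i = R i + \<beta> * (\<Sum>j\<in>UNIV. P i j * F j)" if "i \<in> S" for i
    using FE[of i] that by (simp only: if_True)
  have FN: "F i = 0" if "i \<notin> S" for i
    using FE[of i] that by (simp only: if_False)
  define a0 where "a0 i = \<beta> * (R i + \<beta> * (\<Sum>j\<in>UNIV. P i j * F j))" for i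
  have aS: "a0 j = \<beta> * F j" if "j \<in> S" for j unfolding a0_def FS[OF that, symmetric] ..
  have sol: "\<forall>i. a0 i = \<beta> * R i + \<beta> * (\<Sum>j\<in>S. P i j * a0 j)"
  proof
    fix i
    have "(\<Sum>j\<in>S. P i j * a0 j) = \<beta> * (\<Sum>j\<in>S. P i j * F j)"
      by (simp add: aS sum_distrib_left mult_ac)
    also have "(\<Sum>j\<in>S. P i j * F j) = (\<Sum>j\<in>UNIV. P i j * F j)"
      by (rule sum.mono_neutral_left) (auto simp: FN)
    finally show "a0 i = \<beta> * R i + \<beta> * (\<Sum>j\<in>S. P i j * a0 j)"
      unfolding a0_def by (simp add: algebra_simps)
  qed
  have un: "a = a0" if "\<forall>i. a i = \<beta> * R i + \<beta> * (\<Sum>j\<in>S. P i j * a j)" for a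
    by (rule uniq[OF assms that sol])
  have rs: "rS P \<beta> R S i = R i + \<beta> * (\<Sum>j\<in>UNIV. P i j * F j) - \<beta> * F i" for i
    unfolding rS_def F_def ..
  have vals: "(\<forall>i\<in>S. a0 i = \<beta> * rS P \<beta> R S i / (1 - \<beta>)) \<and> (\<forall>i\<in>-S. a0 i = \<beta> * rS P \<beta> R S i)"
  proof (intro conjI ballI)
    fix i assume "i \<in> S"
    then have "rS P \<beta> R S i = (1 - \<beta>) * F i" unfolding rs FS[OF \<open>i \<in> S\<close>, symmetric] by (simp add: algebra_simps)
    then show "a0 i = \<beta> * rS P \<beta> R S i / (1 - \<beta>)" using aS[OF \<open>i \<in> S\<close>] assms by simp
  next
    fix i assume "i \<in> -S"
    then show "a0 i = \<beta> * rS P \<beta> R S i" unfolding a0_def rs using FN[of i] by simp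
  qed
  show ?thesis using sol un vals by blast
qed

lemma ratio1:
  fixes x c r w :: real assumes "x \<noteq> 0" "c \<noteq> 0"
  shows "(x * r / c) / (x * w / c) = r / w"
  using assms by (cases "w = 0") (simp_all add: field_simps)

lemma ratio2:
  fixes x r w :: real assumes "x \<noteq> 0"
  shows "(x * r) / (x * w) = r / w"
  using assms by simp

theorem mainTheorem10:
  fixes P :: "'n::finite \<Rightarrow> 'n \<Rightarrow> real" and \<beta> :: real and R :: "'n \<Rightarrow> real" and S :: "'n set"
  assumes "stochastic P" and "0 < \<beta>" and "\<beta> < 1"
  shows "(\<exists>!a :: 'n \<Rightarrow> real. \<forall>i. a i = \<beta> * R i + \<beta> * (\<Sum>j\<in>S. P i j * a j))
       \<and> (\<exists>!b :: 'n \<Rightarrow> real. \<forall>i. b i = \<beta> + \<beta> * (\<Sum>j\<in>S. P i j * b j))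
       \<and> (\<forall>a b. (\<forall>i. a i = \<beta> * R i + \<beta> * (\<Sum>j\<in>S. P i j * a j))
              \<longrightarrow> (\<forall>i. b i = \<beta> + \<beta> * (\<Sum>j\<in>S. P i j * b j))
              \<longrightarrow> (\<forall>i\<in>S. a i = \<beta> * rS P \<beta> R S i / (1 - \<beta>) \<and> b i = \<beta> * wS P \<beta> S i / (1 - \<beta>))
                \<and> (\<forall>i\<in>-S. a i = \<beta> * rS P \<beta> R S i \<and> b i = \<beta> * wS P \<beta> S i)
                \<and> (\<forall>i. a i / b i = nuS P \<beta> R S i))"
proof -
  have gf: "gS P \<beta> S = fS P \<beta> (\<lambda>_. 1) S" unfolding gS_def fS_def by (rule ext) simp
  have wr: "rS P \<beta> (\<lambda>_. 1) S i = wS P \<beta> S i" for i unfolding wS_def rS_def gf by simp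
  note GA = gen[OF assms, of R S]
  note GB0 = gen[OF assms, of "\<lambda>_. 1" S]
  have GB: "(\<exists>!b :: 'n \<Rightarrow> real. \<forall>i. b i = \<beta> + \<beta> * (\<Sum>j\<in>S. P i j * b j))
     \<and> (\<forall>b. (\<forall>i. b i = \<beta> + \<beta> * (\<Sum>j\<in>S. P i j * b j)) \<longrightarrow>
          (\<forall>i\<in>S. b i = \<beta> * wS P \<beta> S i / (1 - \<beta>)) \<and> (\<forall>i\<in>-S. b i = \<beta> * wS P \<beta> S i))"
    using GB0 unfolding mult_1_right wr .
  have 3: "(\<forall>i\<in>S. a i = \<beta> * rS P \<beta> R S i / (1 - \<beta>) \<and> b i = \<beta> * wS P \<beta> S i / (1 - \<beta>))
                \<and> (\<forall>i\<in>-S. a i = \<beta> * rS P \<beta> R S i \<and> b i = \<beta> * wS P \<beta> S i)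
                \<and> (\<forall>i. a i / b i = nuS P \<beta> R S i)"
    if ha: "\<forall>i. a i = \<beta> * R i + \<beta> * (\<Sum>j\<in>S. P i j * a j)"
      and hb: "\<forall>i. b i = \<beta> + \<beta> * (\<Sum>j\<in>S. P i j * b j)" for a b
  proof -
    have A: "(\<forall>i\<in>S. a i = \<beta> * rS P \<beta> R S i / (1 - \<beta>)) \<and> (\<forall>i\<in>-S. a i = \<beta> * rS P \<beta> R S i)"
      using GA ha by blast
    have B: "(\<forall>i\<in>S. b i = \<beta> * wS P \<beta> S i / (1 - \<beta>)) \<and> (\<forall>i\<in>-S. b i = \<beta> * wS P \<beta> S i)"
      using GB hb by blast
    have "a i / b i = nuS P \<beta> R S i" for i
    proof (cases "i \<in> S")
      case True
      then have "a i = \<beta> * rS P \<beta> R S i / (1 - \<beta>)" "b i = \<beta> * wS P \<beta> S i / (1 - \<beta>)"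
        using A B by auto
      then show ?thesis unfolding nuS_def using assms by (simp only: ratio1)
    next
      case False
      then have "a i = \<beta> * rS P \<beta> R S i" "b i = \<beta> * wS P \<beta> S i"
        using A B by auto
      then show ?thesis unfolding nuS_def using assms by (simp only: ratio2)
    qed
    then show ?thesis using A B by blast
  qed
  have E1: "\<exists>!a :: 'n \<Rightarrow> real. \<forall>i. a i = \<beta> * R i + \<beta> * (\<Sum>j\<in>S. P i j * a j)"
    using GA by (rule conjunct1)
  have E2: "\<exists>!b :: 'n \<Rightarrow> real. \<forall>i. b i = \<beta> + \<beta> * (\<Sum>j\<in>S. P i j * b j)"
    using GB by (rule conjunct1)
  show ?thesis using E1 E2 3 by blast
qed

end
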